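(* Let $0\le\eta_1<1/5$ and let $\sigma,\sigma_0:[n]\to[K]$ be assignments all of whose community sizes lie in $[(1-\eta_1)\frac nK,(1+\eta_1)\frac nK]$, with $d(\sigma,\sigma_0)=m$ for an integer $0<m<n$. Set $\eta=5\eta_1$. Then $$\alpha(\sigma;\sigma_0)\wedge\gamma(\sigma;\sigma_0)\ge\begin{cases}\frac{(1-\eta)nm}{K}-m^2, & m\le\frac{n}{2K},\\ \frac{2(1-\eta)nm}{9K}, & m>\frac{n}{2K}.\end{cases}$$
   Context: $d(\sigma_1,\sigma_2)=\min_\delta d_H(\sigma_1,\delta\circ\sigma_2)$ over permutations $\delta$ of $[K]$, $d_H$ the Hamming distance. $\alpha(\sigma;\sigma_0)=|\{(i,j):i<j,\ \sigma_0(i)=\sigma_0(j),\ \sigma(i)\ne\sigma(j)\}|$ and $\gamma(\sigma;\sigma_0)=|\{(i,j):i<j,\ \sigma_0(i)\ne\sigma_0(j),\ \sigma(i)=\sigma(j)\}|$. *)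

theory Defs
  imports "HOL-Analysis.Analysis" "HOL-Combinatorics.Permutations"
begin

definition is_assignment :: "nat \<Rightarrow> nat \<Rightarrow> (nat \<Rightarrow> nat) \<Rightarrow> bool" where
  "is_assignment n K \<sigma> \<longleftrightarrow> (\<forall>i<n. \<sigma> i < K)"

definition hamming :: "nat \<Rightarrow> (nat \<Rightarrow> nat) \<Rightarrow> (nat \<Rightarrow> nat) \<Rightarrow> nat" where
  "hamming n \<sigma>1 \<sigma>2 = card {i. i < n \<and> \<sigma>1 i \<noteq> \<sigma>2 i}"

definition dist_assign :: "nat \<Rightarrow> nat \<Rightarrow> (nat \<Rightarrow> nat) \<Rightarrow> (nat \<Rightarrow> nat) \<Rightarrow> nat" where
  "dist_assign n K \<sigma>1 \<sigma>2 = Min {hamming n \<sigma>1 (\<delta> \<circ> \<sigma>2) | \<delta>. \<delta> permutes {..<K}}"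

definition alpha :: "nat \<Rightarrow> (nat \<Rightarrow> nat) \<Rightarrow> (nat \<Rightarrow> nat) \<Rightarrow> nat" where
  "alpha n \<sigma> \<sigma>0 = card {(i, j). i < j \<and> j < n \<and> \<sigma>0 i = \<sigma>0 j \<and> \<sigma> i \<noteq> \<sigma> j}"

definition gamma :: "nat \<Rightarrow> (nat \<Rightarrow> nat) \<Rightarrow> (nat \<Rightarrow> nat) \<Rightarrow> nat" where
  "gamma n \<sigma> \<sigma>0 = card {(i, j). i < j \<and> j < n \<and> \<sigma>0 i \<noteq> \<sigma>0 j \<and> \<sigma> i = \<sigma> j}"

definition comm_size :: "nat \<Rightarrow> (nat \<Rightarrow> nat) \<Rightarrow> nat \<Rightarrow> nat" where
  "comm_size n \<sigma> k = card {i. i < n \<and> \<sigma> i = k}"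

definition balanced :: "nat \<Rightarrow> nat \<Rightarrow> real \<Rightarrow> (nat \<Rightarrow> nat) \<Rightarrow> bool" where
  "balanced n K \<eta>1 \<sigma> \<longleftrightarrow> (\<forall>k<K.
      (1 - \<eta>1) * real n / real K \<le> real (comm_size n \<sigma> k) \<and>
      real (comm_size n \<sigma> k) \<le> (1 + \<eta>1) * real n / real K)"

end

theory Submission
  imports Defs
begin


lemma sum_group_card:
  fixes h :: "nat \<Rightarrow> real" and g :: "nat \<Rightarrow> nat" and n K :: nat
  assumes "\<forall>i<n. g i < K"
  shows "(\<Sum>i<n. h (g i)) = (\<Sum>u<K. real (card {i. i<n \<and> g i = u}) * h u)"
proof -
  have "(\<Sum>u<K. \<Sum>i\<in>{x. x \<in> {..<n} \<and> g x = u}. h (g i)) = (\<Sum>i<n. h (g i))"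
  proof (rule sum.group)
    show "finite {..<n}" by simp
    show "finite {..<K}" by simp
    show "g ` {..<n} \<subseteq> {..<K}" using assms by auto
  qed
  moreover have "(\<Sum>i\<in>{x. x \<in> {..<n} \<and> g x = u}. h (g i)) = real (card {i. i<n \<and> g i = u}) * h u" for u
  proof -
    have "(\<Sum>i\<in>{x. x \<in> {..<n} \<and> g x = u}. h (g i)) = (\<Sum>i\<in>{x. x \<in> {..<n} \<and> g x = u}. h u)"
      by (rule sum.cong) auto
    then show ?thesis by simp
  qed
  ultimately show ?thesis by simp
qed

lemma extend_perm:
  fixes K :: nat and f :: "nat \<Rightarrow> nat"
  assumes "B \<subseteq> {..<K}" "inj_on f B" "f ` B \<subseteq> {..<K}"
  shows "\<exists>p. p permutes {..<K} \<and> (\<forall>u\<in>B. p u = f u)"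
proof -
  have fin: "finite B" using assms(1) finite_subset by blast
  have c1: "card ({..<K} - B) = K - card B" using card_Diff_subset[OF fin assms(1)] by simp
  have c2: "card ({..<K} - f ` B) = K - card (f ` B)"
    using card_Diff_subset[OF finite_imageI[OF fin] assms(3)] by simp
  have c3: "card (f ` B) = card B" by (rule card_image[OF assms(2)])
  have "card ({..<K} - B) = card ({..<K} - f ` B)" using c1 c2 c3 by simp
  then obtain g where g: "bij_betw g ({..<K} - B) ({..<K} - f ` B)"
    using finite_same_card_bij[of "{..<K} - B" "{..<K} - f ` B"] by auto
  define p where "p x = (if x \<in> B then f x else if x < K then g x else x)" for x
  have b1: "bij_betw f B (f ` B)" using assms(2) by (simp add: bij_betw_imageI)
  have e2: "\<And>x. x \<in> {..<K} - B \<Longrightarrow> p x = g x" by (simp add: p_def)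
  have b2: "bij_betw p ({..<K} - B) ({..<K} - f ` B)"
    using bij_betw_cong[of "{..<K} - B" p g] e2 g by blast
  have e3: "\<And>x. x \<in> B \<Longrightarrow> p x = f x" by (simp add: p_def)
  have b3: "bij_betw p B (f ` B)"
    using bij_betw_cong[of B p f] e3 b1 by blast
  have "bij_betw p (B \<union> ({..<K} - B)) (f ` B \<union> ({..<K} - f ` B))"
    by (rule bij_betw_combine[OF b3 b2]) blast
  moreover have "B \<union> ({..<K} - B) = {..<K}" "f ` B \<union> ({..<K} - f ` B) = {..<K}" using assms by auto
  ultimately have bb: "bij_betw p {..<K} {..<K}" by simp
  have st: "\<And>x. x \<notin> {..<K} \<Longrightarrow> p x = x" using assms(1) by (auto simp: p_def)
  have "p permutes {..<K}" by (rule bij_imp_permutes[OF bb st])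
  then show ?thesis using e3 by blast
qed

lemma ham_swap:
  assumes "d permutes S"
  shows "hamming n s0 (d \<circ> s) = hamming n s (inv d \<circ> s0)"
proof -
  have "{i. i < n \<and> s0 i \<noteq> (d \<circ> s) i} = {i. i < n \<and> s i \<noteq> (inv d \<circ> s0) i}"
  proof (intro Collect_cong conj_cong refl)
    fix i
    show "(s0 i \<noteq> (d \<circ> s) i) = (s i \<noteq> (inv d \<circ> s0) i)"
      using permutes_inverses[OF assms] by (metis comp_apply)
  qed
  then show ?thesis by (simp add: hamming_def)
qed


lemma bound1:
  fixes n K m :: nat and \<eta>1 :: real and \<sigma> \<sigma>0 d0 :: "nat \<Rightarrow> nat"
  assumes as: "is_assignment n K \<sigma>0" and bal: "balanced n K \<eta>1 \<sigma>0"
    and d0: "d0 permutes {..<K}" and hm: "hamming n \<sigma> (d0 \<circ> \<sigma>0) = m"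
  shows "real (alpha n \<sigma> \<sigma>0) \<ge> (1 - \<eta>1) * real n * real m / real K - real m ^ 2"
proof -
  define W where "W = {i. i < n \<and> \<sigma> i \<noteq> d0 (\<sigma>0 i)}"
  define C where "C = {i. i < n \<and> \<sigma> i = d0 (\<sigma>0 i)}"
  have cW: "card W = m" using hm by (simp add: hamming_def W_def)
  have fW: "finite W" unfolding W_def by simp
  have fC: "finite C" unfolding C_def by simp
  define Q where "Q = Sigma W (\<lambda>j. {i \<in> C. \<sigma>0 i = \<sigma>0 j})"
  have cQ: "card Q = (\<Sum>j\<in>W. card {i \<in> C. \<sigma>0 i = \<sigma>0 j})"
    unfolding Q_def using fW fC by (simp add: card_SigmaI)
  have each: "real (card {i \<in> C. \<sigma>0 i = \<sigma>0 j}) \<ge> (1-\<eta>1)*real n/real K - real m" if j: "j \<in> W" for j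
  proof -
    have jn: "j < n" using j by (simp add: W_def)
    have "\<sigma>0 j < K" using as jn by (simp add: is_assignment_def)
    then have lb: "(1-\<eta>1)*real n/real K \<le> real (comm_size n \<sigma>0 (\<sigma>0 j))"
      using bal by (simp add: balanced_def)
    have sub: "{i. i < n \<and> \<sigma>0 i = \<sigma>0 j} \<subseteq> {i \<in> C. \<sigma>0 i = \<sigma>0 j} \<union> W"
      by (auto simp: C_def W_def)
    have "comm_size n \<sigma>0 (\<sigma>0 j) \<le> card ({i \<in> C. \<sigma>0 i = \<sigma>0 j} \<union> W)"
      unfolding comm_size_def by (rule card_mono) (use fW fC sub in auto)
    also have "\<dots> \<le> card {i \<in> C. \<sigma>0 i = \<sigma>0 j} + card W" by (rule card_Un_le)
    finally show ?thesis using lb cW by linarith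
  qed
  have "real (card Q) = (\<Sum>j\<in>W. real (card {i \<in> C. \<sigma>0 i = \<sigma>0 j}))" using cQ by simp
  also have "\<dots> \<ge> (\<Sum>j\<in>W. (1-\<eta>1)*real n/real K - real m)" by (rule sum_mono) (rule each)
  finally have qb: "real (card Q) \<ge> real m * ((1-\<eta>1)*real n/real K - real m)" using cW by simp
  define h where "h = (\<lambda>(j::nat, i::nat). (min i j, max i j))"
  define A where "A = {(i, j). i < j \<and> j < n \<and> \<sigma>0 i = \<sigma>0 j \<and> \<sigma> i \<noteq> \<sigma> j}"
  have fA: "finite A"
  proof (rule finite_subset)
    show "A \<subseteq> {..<n} \<times> {..<n}" by (auto simp: A_def)
  qed simp
  have inj: "inj_on h Q"
  proof (rule inj_onI)
    fix x y assume x: "x \<in> Q" and y: "y \<in> Q" and e: "h x = h y"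
    obtain j i where xe: "x = (j, i)" by (cases x)
    obtain j' i' where ye: "y = (j', i')" by (cases y)
    have "i \<in> C" "j \<in> W" "i' \<in> C" "j' \<in> W" using x y xe ye by (auto simp: Q_def)
    then have "i \<noteq> j'" "i' \<noteq> j" "i \<noteq> j" "i' \<noteq> j'" by (auto simp: C_def W_def)
    then show "x = y" using e xe ye by (auto simp: h_def min_def max_def split: if_splits)
  qed
  have img: "h ` Q \<subseteq> A"
  proof
    fix y assume "y \<in> h ` Q"
    then obtain j i where ji: "(j, i) \<in> Q" and y: "y = h (j, i)" by auto
    have i: "i \<in> C" and j: "j \<in> W" and e: "\<sigma>0 i = \<sigma>0 j" using ji by (auto simp: Q_def)
    have ne: "\<sigma> i \<noteq> \<sigma> j" using i j e by (auto simp: C_def W_def)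
    have "i \<noteq> j" using i j by (auto simp: C_def W_def)
    moreover have "i < n" "j < n" using i j by (auto simp: C_def W_def)
    ultimately show "y \<in> A" using y e ne by (auto simp: h_def A_def min_def max_def)
  qed
  have "card Q \<le> card A"
    using card_inj_on_le[OF inj img fA] .
  then have "real (card Q) \<le> real (alpha n \<sigma> \<sigma>0)" by (simp add: alpha_def A_def)
  moreover have "real m * ((1-\<eta>1)*real n/real K - real m) = (1 - \<eta>1) * real n * real m / real K - real m ^ 2"
    by (simp add: field_simps power2_eq_square)
  ultimately show ?thesis using qb by linarith
qed


lemma bound2:
  fixes n K m :: nat and \<eta>1 :: real and \<sigma> \<sigma>0 :: "nat \<Rightarrow> nat"
  assumes e0: "0 \<le> \<eta>1" and e1: "\<eta>1 < 1/5" and K1: "K \<ge> 1"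
    and as: "is_assignment n K \<sigma>" and as0: "is_assignment n K \<sigma>0"
    and bal: "balanced n K \<eta>1 \<sigma>" and bal0: "balanced n K \<eta>1 \<sigma>0"
    and opt: "\<forall>\<delta>. \<delta> permutes {..<K} \<longrightarrow> m \<le> hamming n \<sigma> (\<delta> \<circ> \<sigma>0)"
  shows "real (alpha n \<sigma> \<sigma>0) \<ge> 2 * (1 - 5*\<eta>1) * real n * real m / (9 * real K)"
proof -
  define s where "s = real n / real K"
  have s0: "s \<ge> 0" by (simp add: s_def)
  define a where "a u = card {i. i<n \<and> \<sigma>0 i = u}" for u
  define N where "N u v = card {i. i<n \<and> \<sigma>0 i = u \<and> \<sigma> i = v}" for u v
  define M where "M u = Max (N u ` {..<K})" for u
  have aL: "(1-\<eta>1) * s \<le> real (a u)" if "u<K" for u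
    using bal0 that by (simp add: balanced_def comm_size_def a_def s_def)
  have bU: "real (card {i. i<n \<and> \<sigma> i = v}) \<le> (1+\<eta>1) * s" if "v<K" for v
    using bal that by (simp add: balanced_def comm_size_def s_def)
  have NM: "N u v \<le> M u" if "v<K" for u v
    unfolding M_def by (rule Max_ge) (use that in auto)
  have Mex: "\<exists>v<K. N u v = M u" for u
  proof -
    have "M u \<in> N u ` {..<K}" unfolding M_def by (rule Max_in) (use K1 in \<open>auto simp: lessThan_empty_iff\<close>)
    then show ?thesis by auto
  qed
  have Na: "N u v \<le> a u" for u v
    unfolding N_def a_def by (rule card_mono) auto
  have Ma: "M u \<le> a u" for u using Mex[of u] Na by metis
  define A where "A = {(i, j). i < j \<and> j < n \<and> \<sigma>0 i = \<sigma>0 j \<and> \<sigma> i \<noteq> \<sigma> j}"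
  define P where "P = {(i, j). i < n \<and> j < n \<and> \<sigma>0 i = \<sigma>0 j \<and> \<sigma> i \<noteq> \<sigma> j}"
  have fA: "finite A"
  proof (rule finite_subset)
    show "A \<subseteq> {..<n} \<times> {..<n}" by (auto simp: A_def)
  qed simp
  have PA: "P = A \<union> prod.swap ` A"
  proof
    show "P \<subseteq> A \<union> prod.swap ` A"
    proof
      fix x assume x: "x \<in> P"
      obtain i j where xe: "x = (i, j)" by (cases x)
      have "i \<noteq> j" using x xe by (auto simp: P_def)
      then consider "i < j" | "j < i" by linarith
      then show "x \<in> A \<union> prod.swap ` A"
      proof cases
        case 1 then show ?thesis using x xe by (auto simp: P_def A_def)
      next
        case 2
        then have "(j, i) \<in> A" using x xe by (auto simp: P_def A_def)
        then have "prod.swap (j, i) \<in> prod.swap ` A" by (rule imageI)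
        then show ?thesis using xe by simp
      qed
    qed
    show "A \<union> prod.swap ` A \<subseteq> P" by (auto simp: P_def A_def)
  qed
  have disj: "A \<inter> prod.swap ` A = {}" by (auto simp: A_def)
  have cP: "card P = 2 * alpha n \<sigma> \<sigma>0"
  proof -
    have "card P = card A + card (prod.swap ` A)"
      unfolding PA by (rule card_Un_disjoint) (use fA disj in auto)
    also have "card (prod.swap ` A) = card A" by (rule card_image) (auto simp: inj_on_def)
    finally show ?thesis by (simp add: alpha_def A_def)
  qed
  define R where "R i = {j. j < n \<and> \<sigma>0 i = \<sigma>0 j \<and> \<sigma> i \<noteq> \<sigma> j}" for i
  have PS: "P = Sigma {..<n} R" by (auto simp: P_def R_def)
  have cP2: "card P = (\<Sum>i<n. card (R i))" unfolding PS by (simp add: R_def)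
  have Ri: "real (card (R i)) \<ge> real (a (\<sigma>0 i)) - real (M (\<sigma>0 i))" if i: "i < n" for i
  proof -
    have "{j. j<n \<and> \<sigma>0 j = \<sigma>0 i} = R i \<union> {j. j<n \<and> \<sigma>0 j = \<sigma>0 i \<and> \<sigma> j = \<sigma> i}"
      by (auto simp: R_def)
    moreover have "R i \<inter> {j. j<n \<and> \<sigma>0 j = \<sigma>0 i \<and> \<sigma> j = \<sigma> i} = {}" by (auto simp: R_def)
    ultimately have "a (\<sigma>0 i) = card (R i) + N (\<sigma>0 i) (\<sigma> i)"
      unfolding a_def N_def by (simp add: card_Un_disjoint R_def)
    moreover have "N (\<sigma>0 i) (\<sigma> i) \<le> M (\<sigma>0 i)" using as i by (intro NM) (simp add: is_assignment_def)
    ultimately show ?thesis by simp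
  qed
  have step1: "2 * real (alpha n \<sigma> \<sigma>0) \<ge> (\<Sum>u<K. real (a u) * (real (a u) - real (M u)))"
  proof -
    have "(\<Sum>i<n. real (a (\<sigma>0 i)) - real (M (\<sigma>0 i))) = (\<Sum>u<K. real (card {i. i<n \<and> \<sigma>0 i = u}) * (real (a u) - real (M u)))"
      by (rule sum_group_card[where h = "\<lambda>u. real (a u) - real (M u)"]) (use as0 in \<open>simp add: is_assignment_def\<close>)
    also have "\<dots> = (\<Sum>u<K. real (a u) * (real (a u) - real (M u)))" by (simp add: a_def)
    finally have e: "(\<Sum>i<n. real (a (\<sigma>0 i)) - real (M (\<sigma>0 i))) = \<dots>" .
    have "(\<Sum>i<n. real (a (\<sigma>0 i)) - real (M (\<sigma>0 i))) \<le> (\<Sum>i<n. real (card (R i)))"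
      by (rule sum_mono) (use Ri in simp)
    also have "\<dots> = real (card P)" using cP2 by simp
    also have "\<dots> = 2 * real (alpha n \<sigma> \<sigma>0)" using cP by simp
    finally show ?thesis using e by simp
  qed
  define B where "B = {u \<in> {..<K}. (1+\<eta>1) * s < 2 * real (M u)}"
  define f where "f u = (SOME v. v<K \<and> N u v = M u)" for u
  have f: "f u < K \<and> N u (f u) = M u" for u
    unfolding f_def by (rule someI_ex) (use Mex in auto)
  have injf: "inj_on f B"
  proof (rule inj_onI)
    fix u u' assume u: "u \<in> B" and u': "u' \<in> B" and e: "f u = f u'"
    show "u = u'"
    proof (rule ccontr)
      assume ne: "u \<noteq> u'"
      define v where "v = f u"
      have vK: "v < K" using f v_def by simp
      have "{i. i<n \<and> \<sigma>0 i = u \<and> \<sigma> i = v} \<union> {i. i<n \<and> \<sigma>0 i = u' \<and> \<sigma> i = v} \<subseteq> {i. i<n \<and> \<sigma> i = v}" by auto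
      then have "card ({i. i<n \<and> \<sigma>0 i = u \<and> \<sigma> i = v} \<union> {i. i<n \<and> \<sigma>0 i = u' \<and> \<sigma> i = v}) \<le> card {i. i<n \<and> \<sigma> i = v}"
        by (intro card_mono) auto
      moreover have "card ({i. i<n \<and> \<sigma>0 i = u \<and> \<sigma> i = v} \<union> {i. i<n \<and> \<sigma>0 i = u' \<and> \<sigma> i = v}) = N u v + N u' v"
        unfolding N_def by (rule card_Un_disjoint) (use ne in auto)
      moreover have "N u v = M u" "N u' v = M u'" using f[of u] f[of u'] e v_def by auto
      ultimately have "real (M u) + real (M u') \<le> (1+\<eta>1) * s" using bU[OF vK] by linarith
      moreover have "(1+\<eta>1) * s < 2 * real (M u)" "(1+\<eta>1) * s < 2 * real (M u')" using u u' by (auto simp: B_def)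
      ultimately show False by linarith
    qed
  qed
  have BK: "B \<subseteq> {..<K}" by (auto simp: B_def)
  have fBK: "f ` B \<subseteq> {..<K}" using f by auto
  obtain p where p: "p permutes {..<K}" and pf: "\<forall>u\<in>B. p u = f u"
    using extend_perm[OF BK injf fBK] by blast
  have mh: "m \<le> card {i. i<n \<and> \<sigma> i \<noteq> p (\<sigma>0 i)}" using opt p by (simp add: hamming_def)
  have split: "card {i. i<n \<and> \<sigma> i \<noteq> p (\<sigma>0 i)} + card {i. i<n \<and> \<sigma> i = p (\<sigma>0 i)} = n"
  proof -
    have "card ({i. i<n \<and> \<sigma> i \<noteq> p (\<sigma>0 i)} \<union> {i. i<n \<and> \<sigma> i = p (\<sigma>0 i)}) = card {i. i<n \<and> \<sigma> i \<noteq> p (\<sigma>0 i)} + card {i. i<n \<and> \<sigma> i = p (\<sigma>0 i)}"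
      by (rule card_Un_disjoint) auto
    moreover have "{i. i<n \<and> \<sigma> i \<noteq> p (\<sigma>0 i)} \<union> {i. i<n \<and> \<sigma> i = p (\<sigma>0 i)} = {..<n}" by auto
    ultimately show ?thesis by simp
  qed
  have finB: "finite B" using BK finite_subset by blast
  have "(\<Sum>u\<in>B. N u (f u)) = card (\<Union>u\<in>B. {i. i<n \<and> \<sigma>0 i = u \<and> \<sigma> i = f u})"
    unfolding N_def by (rule card_UN_disjoint[symmetric]) (use finB in auto)
  also have "\<dots> \<le> card {i. i<n \<and> \<sigma> i = p (\<sigma>0 i)}"
    by (rule card_mono) (use pf in auto)
  finally have sB: "(\<Sum>u\<in>B. M u) \<le> card {i. i<n \<and> \<sigma> i = p (\<sigma>0 i)}" using f by simp
  have nsum: "real n = (\<Sum>u<K. real (a u))"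
  proof -
    have "(\<Sum>i<n. (\<lambda>u. 1::real) (\<sigma>0 i)) = (\<Sum>u<K. real (card {i. i<n \<and> \<sigma>0 i = u}) * 1)"
      by (rule sum_group_card) (use as0 in \<open>simp add: is_assignment_def\<close>)
    then show ?thesis by (simp add: a_def)
  qed
  have sBK: "(\<Sum>u\<in>B. real (M u)) = (\<Sum>u<K. if u \<in> B then real (M u) else 0)"
    unfolding B_def using sum.inter_filter[of "{..<K}" "\<lambda>u. real (M u)" "\<lambda>u. (1+\<eta>1) * s < 2 * real (M u)"] by simp
  define e where "e u = (if u \<in> B then real (a u) - real (M u) else real (a u))" for u
  have esum: "(\<Sum>u<K. e u) = (\<Sum>u<K. real (a u)) - (\<Sum>u<K. if u \<in> B then real (M u) else 0)"
    unfolding e_def sum_subtractf[symmetric] by (rule sum.cong) auto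
  have mle: "real m \<le> (\<Sum>u<K. e u)"
  proof -
    have "real (\<Sum>u\<in>B. M u) \<le> real (card {i. i<n \<and> \<sigma> i = p (\<sigma>0 i)})" using sB by linarith
    then have "(\<Sum>u\<in>B. real (M u)) \<le> real n - real m" using mh split by simp
    then show ?thesis using esum sBK nsum by linarith
  qed
  define c where "c = (1 - 3*\<eta>1) / (2*(1+\<eta>1))"
  have c0: "0 \<le> c" using e0 e1 by (simp add: c_def)
  have c1: "c \<le> 1" using e0 e1 by (simp add: c_def field_simps)
  have cs: "c * ((1+\<eta>1) * s) = (1-3*\<eta>1) * s/2" using e0 by (simp add: c_def field_simps)
  have trm: "real (a u) * (real (a u) - real (M u)) \<ge> ((1-\<eta>1) * s*c) * e u" if u: "u < K" for u
  proof -
    have aM: "real (a u) - real (M u) \<ge> 0" using Ma[of u] by simp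
    have t1: "real (a u) * (real (a u) - real (M u)) \<ge> ((1-\<eta>1) * s) * (real (a u) - real (M u))"
      by (rule mult_right_mono[OF aL[OF u] aM])
    have q0: "(1-\<eta>1) * s \<ge> 0" using e1 s0 by simp
    have key: "real (a u) - real (M u) \<ge> c * e u"
    proof (cases "u \<in> B")
      case True
      then have "c * e u = c * (real (a u) - real (M u))" by (simp add: e_def)
      also have "\<dots> \<le> 1 * (real (a u) - real (M u))" by (rule mult_right_mono[OF c1 aM])
      finally show ?thesis by simp
    next
      case False
      then have M2: "2 * real (M u) \<le> (1+\<eta>1) * s" using u by (auto simp: B_def)
      have aU: "real (a u) \<le> (1+\<eta>1) * s"
        using bal0 u by (simp add: balanced_def comm_size_def a_def s_def)
      have "c * e u = c * real (a u)" using False by (simp add: e_def)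
      also have "\<dots> \<le> c * ((1+\<eta>1) * s)" by (rule mult_left_mono[OF aU c0])
      also have "\<dots> = (1-3*\<eta>1) * s/2" by (rule cs)
      finally show ?thesis using aL[OF u] M2 by (simp add: algebra_simps)
    qed
    have "((1-\<eta>1) * s) * (c * e u) \<le> ((1-\<eta>1) * s) * (real (a u) - real (M u))"
      by (rule mult_left_mono[OF key q0])
    then show ?thesis using t1 by (simp add: mult.assoc)
  qed
  have "((1-\<eta>1) * s*c) * real m \<le> ((1-\<eta>1) * s*c) * (\<Sum>u<K. e u)"
    by (rule mult_left_mono[OF mle]) (use e1 s0 c0 in simp)
  also have "\<dots> = (\<Sum>u<K. ((1-\<eta>1) * s*c) * e u)" by (simp add: sum_distrib_left)
  also have "\<dots> \<le> (\<Sum>u<K. real (a u) * (real (a u) - real (M u)))" by (rule sum_mono) (rule trm, simp)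
  also have "\<dots> \<le> 2 * real (alpha n \<sigma> \<sigma>0)" by (rule step1)
  finally have fin: "((1-\<eta>1)*c/2) * (s * real m) \<le> real (alpha n \<sigma> \<sigma>0)" by (simp add: algebra_simps)
  have poly: "2 * (1 - 5*\<eta>1) / 9 \<le> (1-\<eta>1)*c/2"
  proof -
    have "0 < 1 + \<eta>1" using e0 by simp
    have sq: "0 \<le> (1-2*\<eta>1)^2 + 63*\<eta>1^2" by simp
    have "8*(1 - 5*\<eta>1)*(1+\<eta>1) \<le> 9*(1-\<eta>1)*(1-3*\<eta>1)"
      using sq by (simp add: algebra_simps power2_eq_square)
    then show ?thesis using e0 by (simp add: c_def field_simps)
  qed
  have "2 * (1 - 5*\<eta>1) / 9 * (s * real m) \<le> ((1-\<eta>1)*c/2) * (s * real m)"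
    by (rule mult_right_mono[OF poly]) (use s0 in simp)
  moreover have "2 * (1 - 5*\<eta>1) * real n * real m / (9 * real K) = 2 * (1 - 5*\<eta>1) / 9 * (s * real m)"
    by (simp add: s_def)
  ultimately show ?thesis using fin by linarith
qed


theorem lemma4:
  fixes n K m :: nat and \<eta>1 \<eta> :: real and \<sigma> \<sigma>0 :: "nat \<Rightarrow> nat"
  assumes "0 \<le> \<eta>1" and "\<eta>1 < 1/5"
    and "K \<ge> 1"
    and "is_assignment n K \<sigma>" and "is_assignment n K \<sigma>0"
    and "balanced n K \<eta>1 \<sigma>" and "balanced n K \<eta>1 \<sigma>0"
    and "dist_assign n K \<sigma> \<sigma>0 = m" and "0 < m" and "m < n"
    and "\<eta> = 5 * \<eta>1"
  shows "real (min (alpha n \<sigma> \<sigma>0) (gamma n \<sigma> \<sigma>0)) \<ge>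
           (if real m \<le> real n / (2 * real K)
            then (1 - \<eta>) * real n * real m / real K - real m ^ 2
            else 2 * (1 - \<eta>) * real n * real m / (9 * real K))"
proof -
  define S where "S = (\<lambda>\<delta>. hamming n \<sigma> (\<delta> \<circ> \<sigma>0)) ` {\<delta>. \<delta> permutes {..<K}}"
  have SD: "{hamming n \<sigma> (\<delta> \<circ> \<sigma>0) | \<delta>. \<delta> permutes {..<K}} = S" by (auto simp: S_def)
  have mS: "m = Min S" using assms(8) SD by (simp add: dist_assign_def)
  have fS: "finite S" unfolding S_def by (rule finite_imageI) (rule finite_permutations, simp)
  have neS: "S \<noteq> {}" unfolding S_def using permutes_id by blast
  have opt: "\<forall>\<delta>. \<delta> permutes {..<K} \<longrightarrow> m \<le> hamming n \<sigma> (\<delta> \<circ> \<sigma>0)"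
    using mS fS by (auto simp: S_def)
  have "m \<in> S" using mS fS neS Min_in by blast
  then obtain d0 where d0: "d0 permutes {..<K}" and hd0: "hamming n \<sigma> (d0 \<circ> \<sigma>0) = m"
    by (auto simp: S_def)
  have opt': "\<forall>\<delta>. \<delta> permutes {..<K} \<longrightarrow> m \<le> hamming n \<sigma>0 (\<delta> \<circ> \<sigma>)"
  proof (intro allI impI)
    fix \<delta> assume d: "\<delta> permutes {..<K}"
    have "hamming n \<sigma>0 (\<delta> \<circ> \<sigma>) = hamming n \<sigma> (inv \<delta> \<circ> \<sigma>0)" by (rule ham_swap[OF d])
    then show "m \<le> hamming n \<sigma>0 (\<delta> \<circ> \<sigma>)" using opt permutes_inv[OF d] by simp
  qed
  have id0: "inv d0 permutes {..<K}" by (rule permutes_inv[OF d0])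
  have hd0': "hamming n \<sigma>0 (inv d0 \<circ> \<sigma>) = m"
  proof -
    have "hamming n \<sigma>0 (inv d0 \<circ> \<sigma>) = hamming n \<sigma> (inv (inv d0) \<circ> \<sigma>0)" by (rule ham_swap[OF id0])
    also have "inv (inv d0) = d0" using permutes_bij[OF d0] by (simp add: inv_inv_eq)
    finally show ?thesis using hd0 by (simp add: comp_def)
  qed
  have ag: "alpha n \<sigma>0 \<sigma> = gamma n \<sigma> \<sigma>0"
    unfolding alpha_def gamma_def by (rule arg_cong[where f=card]) auto
  have A1: "real (alpha n \<sigma> \<sigma>0) \<ge> (1 - \<eta>1) * real n * real m / real K - real m ^ 2"
    by (rule bound1[OF assms(5) assms(7) d0 hd0])
  have G1: "real (gamma n \<sigma> \<sigma>0) \<ge> (1 - \<eta>1) * real n * real m / real K - real m ^ 2"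
    using bound1[OF assms(4) assms(6) id0 hd0'] ag by simp
  have A2: "real (alpha n \<sigma> \<sigma>0) \<ge> 2 * (1 - 5*\<eta>1) * real n * real m / (9 * real K)"
    by (rule bound2[OF assms(1,2,3,4,5,6,7) opt])
  have G2: "real (gamma n \<sigma> \<sigma>0) \<ge> 2 * (1 - 5*\<eta>1) * real n * real m / (9 * real K)"
    using bound2[OF assms(1,2,3,5,4,7,6) opt'] ag by simp
  have x0: "real n * real m / real K \<ge> 0" by simp
  have "(1 - \<eta>) * real n * real m / real K \<le> (1 - \<eta>1) * real n * real m / real K"
  proof -
    have "(1 - \<eta>) * (real n * real m / real K) \<le> (1 - \<eta>1) * (real n * real m / real K)"
      by (rule mult_right_mono[OF _ x0]) (use assms(1,11) in simp)
    then show ?thesis by simp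
  qed
  then have b1: "min (real (alpha n \<sigma> \<sigma>0)) (real (gamma n \<sigma> \<sigma>0)) \<ge> (1 - \<eta>) * real n * real m / real K - real m ^ 2"
    using A1 G1 by linarith
  have b2: "min (real (alpha n \<sigma> \<sigma>0)) (real (gamma n \<sigma> \<sigma>0)) \<ge> 2 * (1 - \<eta>) * real n * real m / (9 * real K)"
    using A2 G2 assms(11) by simp
  show ?thesis using b1 b2 by (simp add: of_nat_min)
qed

end
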